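(* Let $n\ge 1$ and $0\le \ell\le n$ be integers, let $\lambda=\max\{\ell,n-\ell\}$, and consider the classical encryption scheme defined in the context. Let $X,X'$ be independent, identically distributed random variables on $\{0,1\}^n$ (the plaintext distribution), let $K,K'$ be independent and uniform on $\{0,1\}^\ell$, let $U,U'$ be independent and uniform on $\{0,1\}^\lambda$, and let $V,V'$ be independent and uniform on $\{0,1\}^{n-\ell}$, all these variables being mutually independent. Then $$\Pr\big[\mathsf{Enc}_{UV}(K,X)=\mathsf{Enc}_{U'V'}(K',X')\big]\;\le\;2^{-2n}\Big(1+2^{\,n-\ell-\mathsf H_2(X)}\Big),$$ where $\mathsf H_2(X)=-\log_2\sum_x \Pr[X=x]^2$ is the collision entropy.
   Context: Bit strings are identified with elements of the finite field $\mathrm{GF}(2^\lambda)$ via the polynomial representation (a string of length at most $\lambda$ is viewed as a polynomial of degree $<\lambda$, padded with zeros); addition is bitwise XOR, denoted $\oplus$ or $+$. For a field element $w$, $(w)_{\rm lsb}$ denotes its last (least significant) $n-\ell$ bits, i.e. the polynomial reduced modulo $x^{n-\ell}$. For $u\in\{0,1\}^\lambda$, $v\in\{0,1\}^{n-\ell}$ and key $k\in\{0,1\}^\ell$ define $h_{uv}(k)=k\,\|\,\big((uk)_{\rm lsb}+v\big)\in\{0,1\}^n$, where $\|$ is concatenation and $uk$ is the product in $\mathrm{GF}(2^\lambda)$. The (randomized) encryption of a plaintext $x\in\{0,1\}^n$ is $\mathsf{Enc}_{uv}(k,x)=(u,v,x\oplus h_{uv}(k))$, with $u,v$ drawn uniformly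 at random; decryption is $\mathsf{Dec}(k,(c_1,c_2,c_3))=c_3\oplus h_{c_1c_2}(k)$. Logarithms are base 2. *)

theory Defs
  imports "HOL-Probability.Probability" "HOL-Library.Z2" "HOL-Computational_Algebra.Polynomial"
begin

text \<open>Bit strings of length at most m, as polynomials over GF(2) of degree < m.\<close>
definition bitstr :: "nat \<Rightarrow> bit poly set" where
  "bitstr m = {p. \<forall>i\<ge>m. coeff p i = 0}"

definition unif :: "nat \<Rightarrow> bit poly pmf" where
  "unif m = pmf_of_set (bitstr m)"

text \<open>Multiplication in GF(2^lambda) = GF(2)[x]/(P), P irreducible of degree lambda.\<close>
definition gf_mult :: "bit poly \<Rightarrow> bit poly \<Rightarrow> bit poly \<Rightarrow> bit poly" where
  "gf_mult P a b = (a * b) mod P"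

text \<open>Last (least significant) m bits: reduction modulo x^m.\<close>
definition lsb :: "nat \<Rightarrow> bit poly \<Rightarrow> bit poly" where
  "lsb m w = w mod monom 1 m"

text \<open>Concatenation a || b where b has length m: a * x^m + b.\<close>
definition concat_bits :: "nat \<Rightarrow> bit poly \<Rightarrow> bit poly \<Rightarrow> bit poly" where
  "concat_bits m a b = monom 1 m * a + b"

definition hfun :: "bit poly \<Rightarrow> nat \<Rightarrow> nat \<Rightarrow> bit poly \<Rightarrow> bit poly \<Rightarrow> bit poly \<Rightarrow> bit poly" where
  "hfun P n l u v k = concat_bits (n - l) k (lsb (n - l) (gf_mult P u k) + v)"

definition enc :: "bit poly \<Rightarrow> nat \<Rightarrow> nat \<Rightarrow> bit poly \<Rightarrow> bit poly \<Rightarrow> bit poly \<Rightarrow> bit poly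
    \<Rightarrow> bit poly \<times> bit poly \<times> bit poly" where
  "enc P n l u v k x = (u, v, x + hfun P n l u v k)"

definition coll_entropy :: "'a pmf \<Rightarrow> real" where
  "coll_entropy X = - log 2 (\<Sum>x\<in>set_pmf X. (pmf X x)^2)"

definition enc_coll_prob :: "bit poly \<Rightarrow> nat \<Rightarrow> nat \<Rightarrow> bit poly pmf \<Rightarrow> real" where
  "enc_coll_prob P n l X =
     measure_pmf.prob
       (pair_pmf (pair_pmf X X)
         (pair_pmf (pair_pmf (unif l) (unif l))
           (pair_pmf (pair_pmf (unif (max l (n - l))) (unif (max l (n - l))))
                     (pair_pmf (unif (n - l)) (unif (n - l))))))
       {((x, x'), ((k, k'), ((u, u'), (v, v')))). enc P n l u v k x = enc P n l u' v' k' x'}"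

end

theory Submission
  imports Defs "HOL-Computational_Algebra.Polynomial_Factorial"
begin

lemma bp_neg: "- (p::bit poly) = p"
  by (rule poly_eqI) simp

lemma bp_add_self: "(p::bit poly) + p = 0"
  by (metis bp_neg left_minus)

lemma bp_diff: "(a::bit poly) - b = a + b"
  by (simp add: diff_conv_add_uminus bp_neg)

lemma bp_swap: "((a::bit poly) + b = c + d) \<longleftrightarrow> (a + c = b + d)"
proof -
  have 1: "a + b = c + d \<longleftrightarrow> a = (c + d) - b" by (simp add: eq_diff_eq)
  have 2: "a + c = b + d \<longleftrightarrow> a = (b + d) - c" by (simp add: eq_diff_eq)
  have 3: "(c + d) - b = (b + d) - c" by (simp add: bp_diff algebra_simps)
  show ?thesis using 1 2 3 by simp
qed

lemma bitstr_iff: "p \<in> bitstr m \<longleftrightarrow> p = 0 \<or> degree p < m"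
proof
  assume "p \<in> bitstr m"
  then have h: "\<And>i. i \<ge> m \<Longrightarrow> coeff p i = 0" by (simp add: bitstr_def)
  show "p = 0 \<or> degree p < m"
  proof (rule ccontr)
    assume "\<not> (p = 0 \<or> degree p < m)"
    then have "p \<noteq> 0" "degree p \<ge> m" by auto
    then have "coeff p (degree p) = 0" using h by blast
    with \<open>p \<noteq> 0\<close> show False by simp
  qed
next
  assume "p = 0 \<or> degree p < m"
  then show "p \<in> bitstr m" by (auto simp: bitstr_def coeff_eq_0)
qed

lemma zero_bitstr[simp]: "0 \<in> bitstr m" by (simp add: bitstr_def)

lemma bitstr_add: "a \<in> bitstr m \<Longrightarrow> b \<in> bitstr m \<Longrightarrow> a + b \<in> bitstr m"
  by (simp add: bitstr_def)

lemma bitstr_Suc: "bitstr (Suc m) = (\<lambda>(a,p). pCons a p) ` (UNIV \<times> bitstr m)"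
proof (intro set_eqI iffI)
  fix p assume p: "p \<in> bitstr (Suc m)"
  obtain a q where pq: "p = pCons a q" by (rule pCons_cases)
  have "q \<in> bitstr m" unfolding bitstr_def
  proof (intro CollectI allI impI)
    fix i assume "m \<le> i"
    then have "coeff p (Suc i) = 0" using p by (simp add: bitstr_def)
    then show "coeff q i = 0" by (simp add: pq)
  qed
  then show "p \<in> (\<lambda>(a,p). pCons a p) ` (UNIV \<times> bitstr m)" using pq by auto
next
  fix p assume "p \<in> (\<lambda>(a,p). pCons a p) ` (UNIV \<times> bitstr m)"
  then obtain a q where pq: "p = pCons a q" "q \<in> bitstr m" by auto
  show "p \<in> bitstr (Suc m)" unfolding bitstr_def pq(1)
  proof (intro CollectI allI impI)
    fix i assume "Suc m \<le> i"
    then obtain j where "i = Suc j" "m \<le> j" by (cases i) auto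
    then show "coeff (pCons a q) i = 0" using pq(2) by (simp add: bitstr_def)
  qed
qed

lemma UNIV_bit: "(UNIV :: bit set) = {0, 1}"
  by (auto intro: bit.exhaust)

lemma bitstr_finite_card: "finite (bitstr m) \<and> card (bitstr m) = 2 ^ m"
proof (induction m)
  case 0
  have "bitstr 0 = {0}" by (auto simp: bitstr_iff)
  then show ?case by simp
next
  case (Suc m)
  have inj: "inj_on (\<lambda>(a,p). pCons a p) (UNIV \<times> bitstr m)"
    by (auto simp: inj_on_def)
  have "card (UNIV :: bit set) = 2" by (simp add: UNIV_bit)
  moreover have "finite (UNIV :: bit set)" by (simp add: UNIV_bit)
  ultimately show ?case using Suc inj
    by (simp add: bitstr_Suc card_image card_cartesian_product)
qed

lemma bitstr_finite[simp]: "finite (bitstr m)" using bitstr_finite_card by blast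
lemma bitstr_card[simp]: "card (bitstr m) = 2 ^ m" using bitstr_finite_card by blast

lemma monom_split:
  assumes "b \<in> bitstr m"
  shows "(monom 1 m * a + b) div monom 1 m = a" "(monom 1 m * a + b) mod monom 1 m = b"
proof -
  have nz: "monom (1::bit) m \<noteq> 0" by simp
  have dg: "degree (monom (1::bit) m) = m" by (simp add: degree_monom_eq)
  have bm: "b mod monom 1 m = b" "b div monom 1 m = 0"
    using assms by (auto simp: bitstr_iff dg intro: mod_poly_less div_poly_less)
  show "(monom 1 m * a + b) div monom 1 m = a"
    using nz bm by (simp add: poly_div_add_left)
  show "(monom 1 m * a + b) mod monom 1 m = b"
    using nz bm by (simp add: poly_mod_add_left)
qed

lemma lsb_bitstr: "lsb m y \<in> bitstr m"
proof -
  have nz: "monom (1::bit) m \<noteq> 0" by simp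
  have dg: "degree (monom (1::bit) m) = m" by (simp add: degree_monom_eq)
  show ?thesis unfolding lsb_def bitstr_iff using degree_mod_less[OF nz, of y] dg by auto
qed

lemma mod_bitstr: "degree P = L \<Longrightarrow> L > 0 \<Longrightarrow> (y::bit poly) mod P \<in> bitstr L"
  unfolding bitstr_iff using degree_mod_less[of P y] by (cases "P = 0") auto

lemma div_monom_bitstr:
  assumes "y \<in> bitstr L"
  shows "y div monom 1 m \<in> bitstr (L - m)"
  unfolding bitstr_def
proof (intro CollectI allI impI)
  fix i assume i: "L - m \<le> i"
  define q where "q = y div monom (1::bit) m"
  define r where "r = y mod monom (1::bit) m"
  have y: "y = monom 1 m * q + r" unfolding q_def r_def by (simp add: mult.commute)
  have "r \<in> bitstr m" using lsb_bitstr[of m y] by (simp add: r_def lsb_def)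
  then have "coeff r (i + m) = 0" by (simp add: bitstr_def)
  moreover have "coeff y (i + m) = 0" using assms i by (simp add: bitstr_def)
  ultimately have "coeff (monom 1 m * q) (i + m) = 0" using y
    by (metis add.right_neutral coeff_add)
  then show "coeff (y div monom 1 m) i = 0" by (simp add: coeff_monom_mult q_def)
qed

lemma count_bound:
  assumes irr: "irreducible P" and deg: "degree P = L"
    and d: "d \<in> bitstr L" "d \<noteq> 0" and mL: "m \<le> L"
  shows "card {u \<in> bitstr L. lsb m ((u * d) mod P) = w} \<le> 2 ^ (L - m)"
proof -
  have P0: "P \<noteq> 0" using irr by auto
  have L0: "L > 0"
  proof (rule ccontr)
    assume "\<not> L > 0"
    then have "degree P = 0" using deg by simp
    then have "is_unit P" using P0 by (simp add: is_unit_iff_degree)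
    then show False using irr irreducible_not_unit by blast
  qed
  have pr: "prime_elem P" using irr by (rule field_poly_irreducible_imp_prime)
  define \<phi> where "\<phi> = (\<lambda>u. (u * d) mod P)"
  define S where "S = {u \<in> bitstr L. lsb m ((u * d) mod P) = w}"
  define T where "T = {y \<in> bitstr L. lsb m y = w}"
  have inj: "inj_on \<phi> S"
  proof (rule inj_onI)
    fix u1 u2 assume u1: "u1 \<in> S" and u2: "u2 \<in> S" and eq: "\<phi> u1 = \<phi> u2"
    have "((u1 - u2) * d) mod P = 0"
      using eq unfolding \<phi>_def by (simp add: left_diff_distrib poly_mod_diff_left)
    then have "P dvd (u1 - u2) * d" by (simp add: mod_eq_0_iff_dvd)
    then have "P dvd (u1 - u2) \<or> P dvd d" using pr by (simp add: prime_elem_dvd_mult_iff)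
    moreover have "\<not> P dvd d"
    proof
      assume "P dvd d"
      then have "degree P \<le> degree d" using d(2) by (rule dvd_imp_degree_le)
      moreover have "degree d < L" using d by (simp add: bitstr_iff)
      ultimately show False using deg by simp
    qed
    ultimately have dv: "P dvd (u1 - u2)" by blast
    have "u1 - u2 \<in> bitstr L" using u1 u2 unfolding S_def
      by (simp add: diff_conv_add_uminus bp_neg bitstr_add)
    show "u1 = u2"
    proof (rule ccontr)
      assume "u1 \<noteq> u2"
      then have nz: "u1 - u2 \<noteq> 0" by simp
      with \<open>u1 - u2 \<in> bitstr L\<close> have "degree (u1 - u2) < L" by (simp add: bitstr_iff)
      moreover have "degree P \<le> degree (u1 - u2)" using dv nz by (rule dvd_imp_degree_le)
      ultimately show False using deg by simp
    qed
  qed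
  have img: "\<phi> ` S \<subseteq> T"
    unfolding S_def T_def \<phi>_def using mod_bitstr[OF deg L0] by auto
  have finT: "finite T" unfolding T_def by simp
  have "card S = card (\<phi> ` S)" using inj by (simp add: card_image)
  also have "\<dots> \<le> card T" using img finT by (rule card_mono[rotated])
  also have "\<dots> \<le> card (bitstr (L - m))"
  proof -
    define \<psi> where "\<psi> = (\<lambda>y. y div monom (1::bit) m)"
    have "inj_on \<psi> T"
    proof (rule inj_onI)
      fix y1 y2 assume "y1 \<in> T" "y2 \<in> T" "\<psi> y1 = \<psi> y2"
      then have "y1 div monom 1 m = y2 div monom 1 m" "y1 mod monom 1 m = y2 mod monom 1 m"
        unfolding T_def \<psi>_def lsb_def by auto
      then show "y1 = y2" by (metis div_mult_mod_eq)
    qed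
    moreover have "\<psi> ` T \<subseteq> bitstr (L - m)"
      unfolding T_def \<psi>_def using div_monom_bitstr by auto
    ultimately show ?thesis
      by (metis bitstr_finite card_image card_mono)
  qed
  finally show ?thesis unfolding S_def by simp
qed

lemma bp_eq0: "((x::bit poly) + y = 0) \<longleftrightarrow> x = y"
proof -
  have "x + y = 0 \<longleftrightarrow> x = - y" by (simp add: eq_neg_iff_add_eq_0)
  then show ?thesis by (simp add: bp_neg)
qed

lemma bitstr_mono: "a \<le> b \<Longrightarrow> p \<in> bitstr a \<Longrightarrow> p \<in> bitstr b"
  by (auto simp: bitstr_def)

lemma key_eq:
  assumes "m = n - l"
    and "enc P n l u v k x = enc P n l u' v' k' x'"
  shows "u' = u" "v' = v"
    "x + x' = monom 1 m * (k + k') + lsb m ((u * (k + k')) mod P)"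
proof -
  have e: "u = u'" "v = v'" "x + hfun P n l u v k = x' + hfun P n l u' v' k'"
    using assms(2) by (auto simp: enc_def)
  then show "u' = u" "v' = v" by auto
  have "x + x' = hfun P n l u v k + hfun P n l u v k'" using bp_swap[of x "hfun P n l u v k" x' "hfun P n l u v k'"] e(3)[folded e(1) e(2)] by blast
  also have "\<dots> = monom 1 m * k + (lsb m ((u * k) mod P) + v)
                 + (monom 1 m * k' + (lsb m ((u * k') mod P) + v))"
    by (simp add: hfun_def concat_bits_def gf_mult_def assms(1))
  also have "\<dots> = monom 1 m * (k + k') + (lsb m ((u * k) mod P) + lsb m ((u * k') mod P)) + (v + v)"
    by (simp add: algebra_simps)
  also have "\<dots> = monom 1 m * (k + k') + lsb m ((u * (k + k')) mod P)"
    by (simp add: bp_add_self lsb_def distrib_left poly_mod_add_left)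
  finally show "x + x' = monom 1 m * (k + k') + lsb m ((u * (k + k')) mod P)" .
qed

lemma card_claim:
  assumes irr: "irreducible P" and m: "m = n - l" and L: "L = max l m"
    and deg: "degree P = L"
  shows "card ({((k,k'),((u,u'),(v,v'))). enc P n l u v k x = enc P n l u' v' k' x'}
            \<inter> ((bitstr l \<times> bitstr l) \<times> ((bitstr L \<times> bitstr L) \<times> (bitstr m \<times> bitstr m))))
         \<le> 2^l * 2^m * 2^L * (if x = x' then 1 else 0) + 2^l * 2^L"
proof -
  define S where "S = {((k,k'),((u,u'),(v,v'))). enc P n l u v k x = enc P n l u' v' k' x'}
            \<inter> ((bitstr l \<times> bitstr l) \<times> ((bitstr L \<times> bitstr L) \<times> (bitstr m \<times> bitstr m)))"
  define g where "g = (\<lambda>u d. monom 1 m * d + lsb m ((u * d) mod P))"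
  define D where "D = {(d,u) \<in> bitstr l \<times> bitstr L. x + x' = g u d}"
  define f :: "(bit poly \<times> bit poly) \<times> (bit poly \<times> bit poly) \<times> (bit poly \<times> bit poly)
      \<Rightarrow> bit poly \<times> bit poly \<times> bit poly \<times> bit poly"
    where "f = (\<lambda>((k,k'),((u,u'),(v,v'))). (k, v, (k + k', u)))"
  have finD: "finite D"
    by (rule finite_subset[of _ "bitstr l \<times> bitstr L"]) (auto simp: D_def)
  have inj: "inj_on f S"
  proof (rule inj_onI)
    fix z1 z2 assume z1: "z1 \<in> S" and z2: "z2 \<in> S" and fz: "f z1 = f z2"
    obtain k1 k1' u1 u1' v1 v1' where z1d: "z1 = ((k1,k1'),((u1,u1'),(v1,v1')))"
      by (metis prod.collapse)
    obtain k2 k2' u2 u2' v2 v2' where z2d: "z2 = ((k2,k2'),((u2,u2'),(v2,v2')))"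
      by (metis prod.collapse)
    have e1: "enc P n l u1 v1 k1 x = enc P n l u1' v1' k1' x'" using z1 unfolding S_def z1d by auto
    have e2: "enc P n l u2 v2 k2 x = enc P n l u2' v2' k2' x'" using z2 unfolding S_def z2d by auto
    have f1: "k1 = k2" "v1 = v2" "k1 + k1' = k2 + k2'" "u1 = u2"
      using fz unfolding f_def z1d z2d by auto
    then have "k1' = k2'" by simp
    then show "z1 = z2" unfolding z1d z2d
      using f1 key_eq[OF m e1] key_eq[OF m e2] by auto
  qed
  have img: "f ` S \<subseteq> bitstr l \<times> bitstr m \<times> D"
  proof
    fix y assume "y \<in> f ` S"
    then obtain z where z: "z \<in> S" "y = f z" by blast
    obtain k k' u u' v v' where zd: "z = ((k,k'),((u,u'),(v,v')))"
      by (metis prod.collapse)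
    have e: "enc P n l u v k x = enc P n l u' v' k' x'" using z unfolding S_def zd by auto
    have mem: "k \<in> bitstr l" "k' \<in> bitstr l" "u \<in> bitstr L" "v \<in> bitstr m"
      using z unfolding S_def zd by auto
    show "y \<in> bitstr l \<times> bitstr m \<times> D"
      using z(2) mem key_eq(3)[OF m e] bitstr_add[OF mem(1,2)]
      unfolding zd f_def D_def g_def by auto
  qed
  have "card S \<le> card (bitstr l \<times> bitstr m \<times> D)"
    using card_inj_on_le[OF inj img] finD by simp
  also have "\<dots> = 2^l * 2^m * card D" by (simp add: card_cartesian_product)
  also have "card D \<le> 2^L * (if x = x' then 1 else 0) + 2^(L - m)"
  proof -
    define D0 where "D0 = {z \<in> D. fst z = 0}"
    define D1 where "D1 = {z \<in> D. fst z \<noteq> 0}"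
    have DU: "D = D0 \<union> D1" unfolding D0_def D1_def by auto
    have c0: "card D0 \<le> 2^L * (if x = x' then 1 else 0)"
    proof (cases "x = x'")
      case True
      have "D0 \<subseteq> {0} \<times> bitstr L" unfolding D0_def D_def by auto
      then have "card D0 \<le> card ({0::bit poly} \<times> bitstr L)"
        by (intro card_mono) auto
      then show ?thesis using True by (simp add: card_cartesian_product)
    next
      case False
      have "D0 = {}" unfolding D0_def D_def g_def using False
        by (auto simp: lsb_def bp_eq0)
      then show ?thesis by simp
    qed
    have c1: "card D1 \<le> 2^(L - m)"
    proof -
      define d0 where "d0 = (x + x') div monom 1 m"
      define w where "w = (x + x') mod monom 1 m"
      have sub: "D1 \<subseteq> {d0} \<times> {u \<in> bitstr L. lsb m ((u * d0) mod P) = w}"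
      proof
        fix z assume "z \<in> D1"
        then obtain d u where zd: "z = (d,u)" "d \<in> bitstr l" "u \<in> bitstr L"
          "x + x' = monom 1 m * d + lsb m ((u * d) mod P)"
          unfolding D1_def D_def g_def by auto
        have "d = d0" "lsb m ((u * d) mod P) = w"
          unfolding d0_def w_def zd(4) using monom_split[OF lsb_bitstr] by auto
        then show "z \<in> {d0} \<times> {u \<in> bitstr L. lsb m ((u * d0) mod P) = w}"
          using zd by auto
      qed
      show ?thesis
      proof (cases "d0 \<in> bitstr l \<and> d0 \<noteq> 0")
        case True
        have "card D1 \<le> card ({d0} \<times> {u \<in> bitstr L. lsb m ((u * d0) mod P) = w})"
          using sub by (intro card_mono) auto
        also have "\<dots> = card {u \<in> bitstr L. lsb m ((u * d0) mod P) = w}"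
          by (simp add: card_cartesian_product)
        also have "\<dots> \<le> 2 ^ (L - m)"
          using True L bitstr_mono[of l "max l m" d0] by (intro count_bound[OF irr deg]) auto
        finally show ?thesis .
      next
        case False
        have "D1 = {}"
        proof (rule ccontr)
          assume "D1 \<noteq> {}"
          then obtain z where z: "z \<in> D1" by blast
          then have "fst z = d0" using sub by auto
          moreover have "fst z \<in> bitstr l" "fst z \<noteq> 0" using z unfolding D1_def D_def by auto
          ultimately show False using False by auto
        qed
        then show ?thesis by simp
      qed
    qed
    have "card D \<le> card D0 + card D1" unfolding DU by (rule card_Un_le)
    then show ?thesis using c0 c1 by linarith
  qed
  then have "2^l * 2^m * card D \<le> 2^l * 2^m * (2^L * (if x = x' then 1 else 0) + 2^(L - m))"
    by simp
  also have "\<dots> = 2^l * 2^m * 2^L * (if x = x' then 1 else 0) + 2^l * 2^L"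
  proof -
    have "(2::nat)^m * 2^(L - m) = 2^L" using L by (simp flip: power_add)
    then show ?thesis by (simp add: algebra_simps)
  qed
  finally show ?thesis unfolding S_def .
qed

lemma prob_fin:
  assumes "finite A" "set_pmf M \<subseteq> A"
  shows "measure_pmf.prob M E = (\<Sum>a\<in>A. pmf M a * indicator E a)"
proof -
  have "measure_pmf.prob M E = measure_pmf.expectation M (indicator E :: _ \<Rightarrow> real)"
    by simp
  also have "\<dots> = (\<Sum>a\<in>A. indicator E a * pmf M a)"
    by (rule integral_measure_pmf_real) (use assms in auto)
  finally show ?thesis by (simp add: mult.commute)
qed

lemma pair_unif:
  assumes "finite A" "A \<noteq> {}" "finite B" "B \<noteq> {}"
  shows "pair_pmf (pmf_of_set A) (pmf_of_set B) = pmf_of_set (A \<times> B)"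
proof (rule pmf_eqI)
  fix z :: "'a \<times> 'b"
  obtain a b where z: "z = (a,b)" by (cases z)
  show "pmf (pair_pmf (pmf_of_set A) (pmf_of_set B)) z = pmf (pmf_of_set (A \<times> B)) z"
    using assms by (simp add: z pmf_pair card_cartesian_product indicator_def)
qed

lemma prob_pair:
  assumes "finite (set_pmf Q)" "finite (set_pmf R)"
  shows "measure_pmf.prob (pair_pmf Q R) E
         = (\<Sum>q\<in>set_pmf Q. pmf Q q * measure_pmf.prob R {r. (q,r) \<in> E})"
proof -
  have "measure_pmf.prob (pair_pmf Q R) E
      = (\<Sum>z\<in>set_pmf Q \<times> set_pmf R. pmf (pair_pmf Q R) z * indicator E z)"
    by (rule prob_fin) (use assms in auto)
  also have "\<dots> = (\<Sum>q\<in>set_pmf Q. \<Sum>r\<in>set_pmf R. pmf Q q * (pmf R r * indicator {r. (q,r) \<in> E} r))"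
    by (simp add: sum.cartesian_product' pmf_pair indicator_def mult.assoc)
  also have "\<dots> = (\<Sum>q\<in>set_pmf Q. pmf Q q * measure_pmf.prob R {r. (q,r) \<in> E})"
    by (simp add: sum_distrib_left prob_fin[OF assms(2) order_refl])
  finally show ?thesis .
qed

theorem theorem1:
  fixes n l :: nat and P :: "bit poly" and X :: "bit poly pmf"
  assumes "1 \<le> n" and "l \<le> n"
    and "irreducible P" and "degree P = max l (n - l)"
    and "set_pmf X \<subseteq> bitstr n"
  shows "enc_coll_prob P n l X
           \<le> 2 powr (- 2 * real n) * (1 + 2 powr (real (n - l) - coll_entropy X))"
proof -
  obtain m where m: "m = n - l" by blast
  obtain L where L: "L = max l m" by blast
  have deg: "degree P = L" using assms(4) m L by simp
  define \<Omega> where "\<Omega> = (bitstr l \<times> bitstr l) \<times> ((bitstr L \<times> bitstr L) \<times> (bitstr m \<times> bitstr m))"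
  define Q where "Q = pair_pmf X X"
  define R where "R = pair_pmf (pair_pmf (unif l) (unif l))
           (pair_pmf (pair_pmf (unif L) (unif L)) (pair_pmf (unif m) (unif m)))"
  define E :: "((bit poly \<times> bit poly) \<times> (bit poly \<times> bit poly) \<times> (bit poly \<times> bit poly) \<times> (bit poly \<times> bit poly)) set"
    where "E = {((x, x'), ((k, k'), ((u, u'), (v, v')))). enc P n l u v k x = enc P n l u' v' k' x'}"
  define p where "p = pmf X"
  define CP where "CP = (\<Sum>x\<in>set_pmf X. (p x)^2)"
  define cb :: "bit poly \<Rightarrow> bit poly \<Rightarrow> real"
    where "cb = (\<lambda>x x'. 2^l * 2^m * 2^L * (if x = x' then 1 else 0) + 2^l * 2^L)"
  define c\<Omega> :: real where "c\<Omega> = 2^l * 2^l * (2^L * 2^L * (2^m * 2^m))"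
  have finX: "finite (set_pmf X)" using assms(5) finite_subset bitstr_finite by blast
  have ne: "bitstr j \<noteq> {}" for j using zero_bitstr by blast
  have R\<Omega>: "R = pmf_of_set \<Omega>" unfolding R_def \<Omega>_def unif_def
    by (simp add: pair_unif ne)
  have fin\<Omega>: "finite \<Omega>" "\<Omega> \<noteq> {}" unfolding \<Omega>_def by (auto simp: ne)
  have card\<Omega>: "real (card \<Omega>) = c\<Omega>" unfolding \<Omega>_def c\<Omega>_def by (simp add: card_cartesian_product)
  have c\<Omega>pos: "c\<Omega> > 0" unfolding c\<Omega>_def by simp
  have "enc_coll_prob P n l X = measure_pmf.prob (pair_pmf Q R) E"
    unfolding enc_coll_prob_def Q_def R_def E_def m[symmetric] L[symmetric] by simp
  also have "\<dots> = (\<Sum>q\<in>set_pmf Q. pmf Q q * measure_pmf.prob R {r. (q,r) \<in> E})"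
    by (rule prob_pair) (auto simp: Q_def finX R\<Omega> fin\<Omega>)
  also have "\<dots> \<le> (\<Sum>q\<in>set_pmf Q. pmf Q q * (cb (fst q) (snd q) / c\<Omega>))"
  proof (rule sum_mono, rule mult_left_mono)
    fix q assume "q \<in> set_pmf Q"
    obtain x x' where q: "q = (x, x')" by (cases q)
    have eqs: "{r. (q,r) \<in> E} = {((k,k'),((u,u'),(v,v'))). enc P n l u v k x = enc P n l u' v' k' x'}"
      unfolding q E_def by auto
    have "measure_pmf.prob R {r. (q,r) \<in> E}
        = card ({((k,k'),((u,u'),(v,v'))). enc P n l u v k x = enc P n l u' v' k' x'} \<inter> \<Omega>) / card \<Omega>"
      unfolding R\<Omega> eqs using fin\<Omega> by (simp add: measure_pmf_of_set Int_commute)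
    also have "\<dots> \<le> cb x x' / c\<Omega>"
    proof -
      have "card ({((k,k'),((u,u'),(v,v'))). enc P n l u v k x = enc P n l u' v' k' x'} \<inter> \<Omega>)
         \<le> 2^l * 2^m * 2^L * (if x = x' then 1 else 0) + 2^l * 2^L"
        unfolding \<Omega>_def by (rule card_claim[OF assms(3) m L deg])
      note cc = of_nat_mono[OF this, where 'a=real]
      have "real (card ({((k,k'),((u,u'),(v,v'))). enc P n l u v k x = enc P n l u' v' k' x'} \<inter> \<Omega>))
         \<le> cb x x'"
        unfolding cb_def by (cases "x = x'") (use cc in simp_all)
      then show ?thesis unfolding card\<Omega> using c\<Omega>pos by (simp add: divide_right_mono)
    qed
    finally show "measure_pmf.prob R {r. (q,r) \<in> E} \<le> cb (fst q) (snd q) / c\<Omega>" by (simp add: q)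
  qed simp
  also have "\<dots> = (\<Sum>x\<in>set_pmf X. \<Sum>x'\<in>set_pmf X. p x * p x' * cb x x') / c\<Omega>"
    by (simp add: Q_def sum.cartesian_product' pmf_pair p_def sum_divide_distrib)
  also have "(\<Sum>x\<in>set_pmf X. \<Sum>x'\<in>set_pmf X. p x * p x' * cb x x')
      = 2^l * 2^m * 2^L * CP + 2^l * 2^L"
  proof -
    have s1: "(\<Sum>x'\<in>set_pmf X. p x') = 1" unfolding p_def by (rule sum_pmf_eq_1[OF finX order_refl])
    have inner: "(\<Sum>x'\<in>set_pmf X. p x * p x' * cb x x') = 2^l * 2^m * 2^L * (p x)^2 + 2^l * 2^L * p x"
      if "x \<in> set_pmf X" for x
    proof -
      have "(\<Sum>x'\<in>set_pmf X. p x * p x' * cb x x')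
          = (\<Sum>x'\<in>set_pmf X. (if x = x' then 2^l * 2^m * 2^L * (p x * p x') else 0))
            + (2^l * 2^L * p x) * (\<Sum>x'\<in>set_pmf X. p x')"
      proof -
        have pt: "p x * p x' * cb x x' = (if x = x' then 2^l * 2^m * 2^L * (p x * p x') else 0)
            + (2^l * 2^L * p x) * p x'" for x'
          unfolding cb_def by (simp add: algebra_simps)
        show ?thesis unfolding pt by (simp add: sum.distrib sum_distrib_left)
      qed
      also have "\<dots> = 2^l * 2^m * 2^L * (p x)^2 + 2^l * 2^L * p x"
        using that s1 finX by (simp add: power2_eq_square)
      finally show ?thesis .
    qed
    have "(\<Sum>x\<in>set_pmf X. \<Sum>x'\<in>set_pmf X. p x * p x' * cb x x')
        = (\<Sum>x\<in>set_pmf X. 2^l * 2^m * 2^L * (p x)^2 + 2^l * 2^L * p x)"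
      using inner by (rule sum.cong[OF refl])
    also have "\<dots> = 2^l * 2^m * 2^L * CP + 2^l * 2^L"
      unfolding CP_def by (simp add: sum.distrib sum_distrib_left[symmetric] s1)
    finally show ?thesis .
  qed
  also have "(2^l * 2^m * 2^L * CP + 2^l * 2^L) / c\<Omega>
      \<le> 2 powr (- 2 * real n) * (1 + 2 powr (real (n - l) - coll_entropy X))"
  proof -
    have CPpos: "CP > 0"
    proof -
      obtain x where x: "x \<in> set_pmf X" using set_pmf_not_empty[of X] by blast
      then have "p x > 0" unfolding p_def by (simp add: pmf_positive)
      then have "(p x)^2 > 0" by simp
      moreover have "(p x)^2 \<le> CP" unfolding CP_def
        using finX x by (intro member_le_sum) auto
      ultimately show ?thesis by linarith
    qed
    have H: "coll_entropy X = - log 2 CP" unfolding coll_entropy_def CP_def p_def ..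
    have pw: "2 powr (real (n - l) - coll_entropy X) = 2^m * CP"
      using CPpos by (simp add: H m powr_add powr_realpow)
    define e where "e = l + L + 2 * m"
    have ne: "2 * n \<le> e" unfolding e_def using m L assms(2) by simp
    have eq1: "(2^l * 2^m * 2^L * CP + 2^l * 2^L) / c\<Omega> = (2^m * CP + 1) / (2::real)^e"
    proof -
      have "c\<Omega> = (2::real)^l * 2^L * 2^e" unfolding c\<Omega>_def e_def by (simp add: power_add mult_2)
      then show ?thesis by (simp add: field_simps)
    qed
    have "(2::real)^(2*n) \<le> 2^e" using ne by (rule power_increasing) simp
    then have "(2^m * CP + 1) / (2::real)^e \<le> (2^m * CP + 1) / 2^(2*n)"
      using CPpos by (intro divide_left_mono) auto
    also have "\<dots> = 2 powr (- 2 * real n) * (1 + 2 powr (real (n - l) - coll_entropy X))"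
    proof -
      have "2 powr (- 2 * real n) = 1 / (2::real)^(2*n)"
        by (simp add: powr_minus powr_realpow[symmetric] divide_inverse)
      then show ?thesis by (simp add: pw)
    qed
    finally show ?thesis using eq1 by simp
  qed
  finally show ?thesis .
qed

end
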